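(* Let $\mathcal M$ satisfy sufficient demand and let $(\hat X,\hat p)$ be a market equilibrium of $\mathcal M$. Then there exist $\hat\lambda\in\mathbb R^A$ with $\hat\lambda_i>0$ for all $i$, and $\hat\alpha\ge0$, such that $\hat X$ is an optimal solution of $LP(\hat\lambda)$ and $(\hat\alpha,\hat p)$ is an optimal solution of $DLP(\hat\lambda)$.
   Context: A market $\mathcal M$ consists of a finite set $A$ of agents, a finite set $G$ of divisible goods each with supply $1$, a finite index set $C$; agent $i$ has real coefficients $a_{ijk}$, requirements $r_{ik}\ge0$, delays $d_{ij}\ge0$, budget $m_i>0$. CC$(i)$: $\sum_ja_{ijk}x_{ij}\ge r_{ik}$ for all $k$, $x_{ij}\ge0$. $(X,p)$ is a market equilibrium if $\sum_ix_{ij}\le1$ for all $j$, each $\mathbf x_i$ minimizes $\sum_jd_{ij}x_{ij}$ subject to CC$(i)$ and $\sum_jp_jx_{ij}\le m_i$, and $\sum_ix_{ij}<1\Rightarrow p_j=0$. Sufficient demand: for every agent $i$, every optimal solution of "minimize $\sum_jd_{ij}x_{ij}$ s.t. CC$(i)$" has some $j$ with $x_{ij}>1$. $LP(\lambda)$: minimize $\sum_i\lambda_i\sum_jd_{ij}x_{ij}$ s.t. $\sum_ja_{ijk}x_{ij}\ge r_{ik}$ for all $(i,k)$, $\sum_ix_{ij}\le1$ for all $j$, $x\ge0$. $DLP(\lambda)$: maximize $\sum_{i,k}r_{ik}\alpha_{ik}-\sum_jp_j$ s.t. $\lambda_id_{ij}\ge\sum_ka_{ijk}\alpha_{ik}-p_j$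 for all $(i,j)$, $\alpha\ge0,p\ge0$. *)

theory Defs
  imports Complex_Main
begin

record ('a, 'g, 'c) market =
  agents :: "'a set"
  goods  :: "'g set"
  cidx   :: "'c set"
  coef   :: "'a \<Rightarrow> 'g \<Rightarrow> 'c \<Rightarrow> real"
  req    :: "'a \<Rightarrow> 'c \<Rightarrow> real"
  delay  :: "'a \<Rightarrow> 'g \<Rightarrow> real"
  budget :: "'a \<Rightarrow> real"

definition valid_market :: "('a, 'g, 'c) market \<Rightarrow> bool" where
  "valid_market M \<longleftrightarrow>
     finite (agents M) \<and> finite (goods M) \<and> finite (cidx M) \<and>
     (\<forall>i\<in>agents M. \<forall>k\<in>cidx M. req M i k \<ge> 0) \<and>
     (\<forall>i\<in>agents M. \<forall>j\<in>goods M. delay M i j \<ge> 0) \<and>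
     (\<forall>i\<in>agents M. budget M i > 0)"

definition CC :: "('a, 'g, 'c) market \<Rightarrow> 'a \<Rightarrow> ('g \<Rightarrow> real) \<Rightarrow> bool" where
  "CC M i x \<longleftrightarrow>
     (\<forall>k\<in>cidx M. (\<Sum>j\<in>goods M. coef M i j k * x j) \<ge> req M i k) \<and>
     (\<forall>j\<in>goods M. x j \<ge> 0)"

definition cost :: "('a, 'g, 'c) market \<Rightarrow> 'a \<Rightarrow> ('g \<Rightarrow> real) \<Rightarrow> real" where
  "cost M i x = (\<Sum>j\<in>goods M. delay M i j * x j)"

definition optimal_bundle :: "('a, 'g, 'c) market \<Rightarrow> ('g \<Rightarrow> real) \<Rightarrow> 'a \<Rightarrow> ('g \<Rightarrow> real) \<Rightarrow> bool" where
  "optimal_bundle M p i x \<longleftrightarrow>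
     CC M i x \<and> (\<Sum>j\<in>goods M. p j * x j) \<le> budget M i \<and>
     (\<forall>y. CC M i y \<and> (\<Sum>j\<in>goods M. p j * y j) \<le> budget M i \<longrightarrow> cost M i x \<le> cost M i y)"

definition market_equilibrium :: "('a, 'g, 'c) market \<Rightarrow> ('a \<Rightarrow> 'g \<Rightarrow> real) \<Rightarrow> ('g \<Rightarrow> real) \<Rightarrow> bool" where
  "market_equilibrium M X p \<longleftrightarrow>
     (\<forall>j\<in>goods M. p j \<ge> 0) \<and>
     (\<forall>j\<in>goods M. (\<Sum>i\<in>agents M. X i j) \<le> 1) \<and>
     (\<forall>i\<in>agents M. optimal_bundle M p i (X i)) \<and>
     (\<forall>j\<in>goods M. (\<Sum>i\<in>agents M. X i j) < 1 \<longrightarrow> p j = 0)"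

definition sufficient_demand :: "('a, 'g, 'c) market \<Rightarrow> bool" where
  "sufficient_demand M \<longleftrightarrow>
     (\<forall>i\<in>agents M. \<forall>x. (CC M i x \<and> (\<forall>y. CC M i y \<longrightarrow> cost M i x \<le> cost M i y))
        \<longrightarrow> (\<exists>j\<in>goods M. x j > 1))"

definition LP_feasible :: "('a, 'g, 'c) market \<Rightarrow> ('a \<Rightarrow> 'g \<Rightarrow> real) \<Rightarrow> bool" where
  "LP_feasible M X \<longleftrightarrow>
     (\<forall>i\<in>agents M. \<forall>k\<in>cidx M. (\<Sum>j\<in>goods M. coef M i j k * X i j) \<ge> req M i k) \<and>
     (\<forall>j\<in>goods M. (\<Sum>i\<in>agents M. X i j) \<le> 1) \<and>
     (\<forall>i\<in>agents M. \<forall>j\<in>goods M. X i j \<ge> 0)"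

definition LP_obj :: "('a, 'g, 'c) market \<Rightarrow> ('a \<Rightarrow> real) \<Rightarrow> ('a \<Rightarrow> 'g \<Rightarrow> real) \<Rightarrow> real" where
  "LP_obj M lam X = (\<Sum>i\<in>agents M. lam i * (\<Sum>j\<in>goods M. delay M i j * X i j))"

definition LP_optimal :: "('a, 'g, 'c) market \<Rightarrow> ('a \<Rightarrow> real) \<Rightarrow> ('a \<Rightarrow> 'g \<Rightarrow> real) \<Rightarrow> bool" where
  "LP_optimal M lam X \<longleftrightarrow>
     LP_feasible M X \<and> (\<forall>Y. LP_feasible M Y \<longrightarrow> LP_obj M lam X \<le> LP_obj M lam Y)"

definition DLP_feasible :: "('a, 'g, 'c) market \<Rightarrow> ('a \<Rightarrow> real) \<Rightarrow> ('a \<Rightarrow> 'c \<Rightarrow> real) \<Rightarrow> ('g \<Rightarrow> real) \<Rightarrow> bool" where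
  "DLP_feasible M lam \<alpha> p \<longleftrightarrow>
     (\<forall>i\<in>agents M. \<forall>j\<in>goods M.
        lam i * delay M i j \<ge> (\<Sum>k\<in>cidx M. coef M i j k * \<alpha> i k) - p j) \<and>
     (\<forall>i\<in>agents M. \<forall>k\<in>cidx M. \<alpha> i k \<ge> 0) \<and>
     (\<forall>j\<in>goods M. p j \<ge> 0)"

definition DLP_obj :: "('a, 'g, 'c) market \<Rightarrow> ('a \<Rightarrow> 'c \<Rightarrow> real) \<Rightarrow> ('g \<Rightarrow> real) \<Rightarrow> real" where
  "DLP_obj M \<alpha> p = (\<Sum>i\<in>agents M. \<Sum>k\<in>cidx M. req M i k * \<alpha> i k) - (\<Sum>j\<in>goods M. p j)"

definition DLP_optimal :: "('a, 'g, 'c) market \<Rightarrow> ('a \<Rightarrow> real) \<Rightarrow> ('a \<Rightarrow> 'c \<Rightarrow> real) \<Rightarrow> ('g \<Rightarrow> real) \<Rightarrow> bool" where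
  "DLP_optimal M lam \<alpha> p \<longleftrightarrow>
     DLP_feasible M lam \<alpha> p \<and>
     (\<forall>\<beta> q. DLP_feasible M lam \<beta> q \<longrightarrow> DLP_obj M \<beta> q \<le> DLP_obj M \<alpha> p)"

end

theory Submission
  imports Defs
begin


inductive_set cone_of :: "(('v \<Rightarrow> real) \<times> real) set \<Rightarrow> (('v \<Rightarrow> real) \<times> real) set"
  for C where
  base: "c \<in> C \<Longrightarrow> c \<in> cone_of C"
| add: "c \<in> cone_of C \<Longrightarrow> d \<in> cone_of C \<Longrightarrow> (\<lambda>j. fst c j + fst d j, snd c + snd d) \<in> cone_of C"
| scale: "c \<in> cone_of C \<Longrightarrow> t \<ge> 0 \<Longrightarrow> (\<lambda>j. t * fst c j, t * snd c) \<in> cone_of C"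

lemma cone_of_zero_coord:
  assumes "c \<in> cone_of C" "\<forall>d\<in>C. fst d v = 0" shows "fst c v = 0"
  using assms by (induction rule: cone_of.induct) auto

lemma sum_ind: "finite L \<Longrightarrow> l \<in> L \<Longrightarrow> (\<Sum>la\<in>L. (if la = l then 1 else 0) * (g la::real)) = g l"
proof -
  assume "finite L" "l \<in> L"
  have "(\<Sum>la\<in>L. (if la = l then 1 else 0) * g la) = (\<Sum>la\<in>L. if la = l then g la else 0)"
    by (rule sum.cong) auto
  also have "\<dots> = g l" using \<open>finite L\<close> \<open>l \<in> L\<close> by (simp add: sum.delta')
  finally show ?thesis .
qed

lemma cone_sum:
  assumes "finite L" "c \<in> cone_of ((\<lambda>l. (A l, b l)) ` L)"
  shows "\<exists>y. (\<forall>l\<in>L. y l \<ge> 0) \<and> (\<forall>j. fst c j = (\<Sum>l\<in>L. y l * A l j)) \<and> snd c = (\<Sum>l\<in>L. y l * b l)"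
  using assms(2)
proof (induction rule: cone_of.induct)
  case (base c)
  then obtain l where l: "l \<in> L" "c = (A l, b l)" by auto
  show ?case
    by (rule exI[of _ "\<lambda>l'. if l' = l then 1 else 0"]) (simp add: l assms(1) sum_ind)
next
  case (add c d)
  then obtain y1 y2 where y1: "(\<forall>l\<in>L. y1 l \<ge> 0) \<and> (\<forall>j. fst c j = (\<Sum>l\<in>L. y1 l * A l j)) \<and> snd c = (\<Sum>l\<in>L. y1 l * b l)"
    and y2: "(\<forall>l\<in>L. y2 l \<ge> 0) \<and> (\<forall>j. fst d j = (\<Sum>l\<in>L. y2 l * A l j)) \<and> snd d = (\<Sum>l\<in>L. y2 l * b l)" by blast
  show ?case
    by (rule exI[of _ "\<lambda>l. y1 l + y2 l"]) (simp add: y1 y2 distrib_right sum.distrib)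
next
  case (scale c t)
  then obtain y1 where y1: "(\<forall>l\<in>L. y1 l \<ge> 0) \<and> (\<forall>j. fst c j = (\<Sum>l\<in>L. y1 l * A l j)) \<and> snd c = (\<Sum>l\<in>L. y1 l * b l)" by blast
  show ?case
    by (rule exI[of _ "\<lambda>l. t * y1 l"]) (simp add: y1 scale sum_distrib_left mult.assoc)
qed

lemma fm_core:
  fixes C :: "(('v \<Rightarrow> real) \<times> real) set"
  assumes "finite J"
  shows "finite C \<Longrightarrow> (\<exists>x. \<forall>c\<in>C. (\<Sum>j\<in>J. fst c j * x j) \<le> snd c) \<or>
           (\<exists>c\<in>cone_of C. (\<forall>j\<in>J. fst c j = 0) \<and> snd c < 0)"
  using assms
proof (induction J arbitrary: C rule: finite_induct)
  case empty
  show ?case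
  proof (cases "\<forall>c\<in>C. 0 \<le> snd c")
    case True then show ?thesis by auto
  next
    case False
    then obtain c where "c \<in> C" "snd c < 0" by force
    then show ?thesis by (auto intro: cone_of.base)
  qed
next
  case (insert v F C)
  define P where "P = {c\<in>C. fst c v > 0}"
  define N where "N = {c\<in>C. fst c v < 0}"
  define Z where "Z = {c\<in>C. fst c v = 0}"
  define comb where "comb = (\<lambda>(p::('v \<Rightarrow> real) \<times> real) (n::('v \<Rightarrow> real) \<times> real).
     (\<lambda>j. (- fst n v) * fst p j + fst p v * fst n j, (- fst n v) * snd p + fst p v * snd n))"
  define C' where "C' = Z \<union> (\<lambda>(p,n). comb p n) ` (P \<times> N)"
  have finP: "finite P" and finN: "finite N" using insert.prems by (auto simp: P_def N_def)
  have "finite C'" unfolding C'_def Z_def using finP finN insert.prems by auto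
  from insert.IH[OF this]
  consider (feas) x' where "\<forall>c\<in>C'. (\<Sum>j\<in>F. fst c j * x' j) \<le> snd c"
    | (cert) c where "c \<in> cone_of C'" "\<forall>j\<in>F. fst c j = 0" "snd c < 0" by blast
  then show ?case
  proof cases
    case cert
    have zv: "\<forall>d\<in>C'. fst d v = 0" by (auto simp: C'_def Z_def comb_def)
    have sub: "d \<in> cone_of C" if "d \<in> cone_of C'" for d
      using that
    proof (induction rule: cone_of.induct)
      case (base c)
      show ?case
      proof (cases "c \<in> Z")
        case True then show ?thesis by (auto simp: Z_def intro: cone_of.base)
      next
        case False
        with base obtain p n where pn: "p \<in> P" "n \<in> N" "c = comb p n" by (auto simp: C'_def)
        have p: "p \<in> cone_of C" and n: "n \<in> cone_of C" using pn by (auto simp: P_def N_def intro: cone_of.base)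
        have "- fst n v \<ge> 0" "fst p v \<ge> 0" using pn by (auto simp: P_def N_def)
        from cone_of.add[OF cone_of.scale[OF p this(1)] cone_of.scale[OF n this(2)]]
        show ?thesis by (simp add: pn comb_def)
      qed
    qed (auto intro: cone_of.add cone_of.scale)
    have "fst c v = 0" using cone_of_zero_coord[OF cert(1) zv] .
    then have "c \<in> cone_of C" "\<forall>j\<in>insert v F. fst c j = 0" using cert sub by auto
    then show ?thesis using cert(3) by blast
  next
    case feas
    define S where "S c = (\<Sum>j\<in>F. fst c j * x' j)" for c :: "('v \<Rightarrow> real) \<times> real"
    define q where "q c = (snd c - S c) / fst c v" for c :: "('v \<Rightarrow> real) \<times> real"
    define t where "t = (if N = {} then (if P = {} then 0 else Min (q ` P)) else Max (q ` N))"
    define x where "x = x'(v := t)"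
    have key: "q n \<le> q p" if p: "p \<in> P" and n: "n \<in> N" for p n
    proof -
      have "comb p n \<in> C'" using p n by (auto simp: C'_def)
      with feas have "S (comb p n) \<le> snd (comb p n)" by (auto simp: S_def)
      moreover have "S (comb p n) = (- fst n v) * S p + fst p v * S n"
        unfolding S_def comb_def sum_distrib_left sum.distrib[symmetric]
        by (simp, rule sum.cong, simp_all add: algebra_simps)
      ultimately have "0 \<le> (- fst n v) * (snd p - S p) + fst p v * (snd n - S n)"
        by (simp add: comb_def algebra_simps)
      moreover have "snd p - S p = fst p v * q p" "snd n - S n = fst n v * q n"
        using p n by (auto simp: q_def P_def N_def)
      ultimately have "0 \<le> (fst p v * (- fst n v)) * (q p - q n)"
        by (simp add: algebra_simps)
      moreover have "fst p v * (- fst n v) > 0" using p n by (simp add: P_def N_def mult_pos_neg)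
      ultimately show ?thesis
        by (metis diff_ge_0_iff_ge zero_le_mult_iff linorder_not_le)
    qed
    have tP: "t \<le> q p" if "p \<in> P" for p
    proof (cases "N = {}")
      case True then show ?thesis using that finP by (auto simp: t_def)
    next
      case False
      then show ?thesis using that finN key by (auto simp: t_def)
    qed
    have tN: "q n \<le> t" if "n \<in> N" for n
      using that finN by (auto simp: t_def)
    have "\<forall>c\<in>C. (\<Sum>j\<in>insert v F. fst c j * x j) \<le> snd c"
    proof
      fix c assume c: "c \<in> C"
      have "(\<Sum>j\<in>insert v F. fst c j * x j) = fst c v * t + S c"
        using insert.hyps by (simp add: x_def S_def, intro sum.cong, auto)
      also have "\<dots> \<le> snd c"
      proof -
        consider "c \<in> P" | "c \<in> N" | "c \<in> Z" using c by (force simp: P_def N_def Z_def)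
        then show ?thesis
        proof cases
          case 1
          then have pos: "fst c v > 0" by (simp add: P_def)
          have "fst c v * t \<le> fst c v * q c" using tP[OF 1] pos by simp
          also have "\<dots> = snd c - S c" using pos by (simp add: q_def)
          finally show ?thesis by simp
        next
          case 2
          then have neg: "fst c v < 0" by (simp add: N_def)
          have "fst c v * t \<le> fst c v * q c" using tN[OF 2] neg by (simp add: mult_le_cancel_left)
          also have "\<dots> = snd c - S c" using neg by (simp add: q_def)
          finally show ?thesis by simp
        next
          case 3
          then have "c \<in> C'" by (simp add: C'_def)
          with feas 3 show ?thesis by (simp add: S_def Z_def)
        qed
      qed
      finally show "(\<Sum>j\<in>insert v F. fst c j * x j) \<le> snd c" .
    qed
    then show ?thesis by blast
  qed
qed

lemma farkas:
  fixes A :: "'l \<Rightarrow> 'v \<Rightarrow> real" and b :: "'l \<Rightarrow> real"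
  assumes "finite J" "finite L"
  shows "(\<exists>x. \<forall>l\<in>L. (\<Sum>j\<in>J. A l j * x j) \<le> b l) \<or>
         (\<exists>y. (\<forall>l\<in>L. y l \<ge> 0) \<and> (\<forall>j\<in>J. (\<Sum>l\<in>L. y l * A l j) = 0) \<and> (\<Sum>l\<in>L. y l * b l) < 0)"
proof -
  have "finite ((\<lambda>l. (A l, b l)) ` L)" using assms by simp
  from fm_core[OF assms(1) this]
  show ?thesis
  proof
    assume "\<exists>x. \<forall>c\<in>(\<lambda>l. (A l, b l)) ` L. (\<Sum>j\<in>J. fst c j * x j) \<le> snd c"
    then show ?thesis by auto
  next
    assume "\<exists>c\<in>cone_of ((\<lambda>l. (A l, b l)) ` L). (\<forall>j\<in>J. fst c j = 0) \<and> snd c < 0"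
    then obtain c where c: "c \<in> cone_of ((\<lambda>l. (A l, b l)) ` L)" "\<forall>j\<in>J. fst c j = 0" "snd c < 0" by blast
    from cone_sum[OF assms(2) c(1)] obtain y where
      "(\<forall>l\<in>L. y l \<ge> 0) \<and> (\<forall>j. fst c j = (\<Sum>l\<in>L. y l * A l j)) \<and> snd c = (\<Sum>l\<in>L. y l * b l)" by blast
    then show ?thesis using c by metis
  qed
qed



lemma wd:
  fixes y d pr :: "'g \<Rightarrow> real" and a :: "'g \<Rightarrow> 'c \<Rightarrow> real" and \<alpha> :: "'c \<Rightarrow> real"
  assumes "\<forall>j\<in>G. y j \<ge> 0" "\<forall>j\<in>G. d j \<ge> (\<Sum>k\<in>K. a j k * \<alpha> k) - \<mu> * pr j"
  shows "(\<Sum>k\<in>K. \<alpha> k * (\<Sum>j\<in>G. a j k * y j)) - \<mu> * (\<Sum>j\<in>G. pr j * y j) \<le> (\<Sum>j\<in>G. d j * y j)"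
proof -
  have "(\<Sum>k\<in>K. \<alpha> k * (\<Sum>j\<in>G. a j k * y j)) - \<mu> * (\<Sum>j\<in>G. pr j * y j)
      = (\<Sum>j\<in>G. ((\<Sum>k\<in>K. a j k * \<alpha> k) - \<mu> * pr j) * y j)"
  proof -
    have "(\<Sum>k\<in>K. \<alpha> k * (\<Sum>j\<in>G. a j k * y j)) = (\<Sum>k\<in>K. \<Sum>j\<in>G. a j k * \<alpha> k * y j)"
      by (simp add: sum_distrib_left mult.commute mult.left_commute)
    also have "\<dots> = (\<Sum>j\<in>G. \<Sum>k\<in>K. a j k * \<alpha> k * y j)" by (rule sum.swap)
    also have "\<dots> = (\<Sum>j\<in>G. (\<Sum>k\<in>K. a j k * \<alpha> k) * y j)" by (simp add: sum_distrib_right)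
    finally show ?thesis
      by (simp add: left_diff_distrib sum_subtractf sum_distrib_left mult.assoc)
  qed
  also have "\<dots> \<le> (\<Sum>j\<in>G. d j * y j)"
    by (rule sum_mono) (use assms in \<open>auto intro: mult_right_mono\<close>)
  finally show ?thesis .
qed

datatype ('c, 'g) cons = Cov 'c | Nn 'g | Bud | Tpos | Obj

lemma sumJ:
  assumes "finite G"
  shows "(\<Sum>v\<in>insert None (Some ` G). f v) = (f None :: real) + (\<Sum>j\<in>G. f (Some j))"
  using assms by (simp add: sum.reindex)

lemma sumL:
  assumes "finite G" "finite K"
  shows "(\<Sum>l\<in>Cov ` K \<union> Nn ` G \<union> {Bud, Tpos, Obj}. g l) =
    (\<Sum>k\<in>K. g (Cov k)) + (\<Sum>j\<in>G. g (Nn j)) + g Bud + g Tpos + (g Obj :: real)"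
proof -
  have d1: "(Cov ` K \<union> Nn ` G) \<inter> {Bud, Tpos, Obj} = {}" by auto
  have d2: "Cov ` K \<inter> Nn ` G = {}" by auto
  have "(\<Sum>l\<in>Cov ` K \<union> Nn ` G \<union> {Bud, Tpos, Obj}. g l) =
      (\<Sum>l\<in>Cov ` K \<union> Nn ` G. g l) + (\<Sum>l\<in>{Bud, Tpos, Obj}. g l)"
    using assms d1 by (intro sum.union_disjoint) auto
  also have "(\<Sum>l\<in>Cov ` K \<union> Nn ` G. g l) = (\<Sum>l\<in>Cov ` K. g l) + (\<Sum>l\<in>Nn ` G. g l)"
    using assms d2 by (intro sum.union_disjoint) auto
  finally show ?thesis using assms by (simp add: sum.reindex inj_on_def)
qed

lemma sum_ind2: "finite G \<Longrightarrow> j \<in> G \<Longrightarrow> (\<Sum>j'\<in>G. (if j' = j then c else 0) * (g j'::real)) = c * g j"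
proof -
  assume "finite G" "j \<in> G"
  have "(\<Sum>j'\<in>G. (if j' = j then c else 0) * g j') = (\<Sum>j'\<in>G. if j' = j then c * g j' else 0)"
    by (rule sum.cong) auto
  also have "\<dots> = c * g j" using \<open>finite G\<close> \<open>j \<in> G\<close> by (simp add: sum.delta')
  finally show ?thesis .
qed

lemma agent_dual:
  fixes G :: "'g set" and K :: "'c set" and a :: "'g \<Rightarrow> 'c \<Rightarrow> real" and r :: "'c \<Rightarrow> real"
    and d pr xs :: "'g \<Rightarrow> real" and m :: real
  assumes fG: "finite G" and fK: "finite K"
    and fe1: "\<forall>k\<in>K. (\<Sum>j\<in>G. a j k * xs j) \<ge> r k" and fe2: "\<forall>j\<in>G. xs j \<ge> 0"
    and fe3: "(\<Sum>j\<in>G. pr j * xs j) \<le> m"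
    and opt: "\<forall>y. (\<forall>k\<in>K. (\<Sum>j\<in>G. a j k * y j) \<ge> r k) \<and> (\<forall>j\<in>G. y j \<ge> 0) \<and> (\<Sum>j\<in>G. pr j * y j) \<le> m
               \<longrightarrow> (\<Sum>j\<in>G. d j * xs j) \<le> (\<Sum>j\<in>G. d j * y j)"
  shows "\<exists>\<alpha> \<mu>. (\<forall>k\<in>K. \<alpha> k \<ge> 0) \<and> \<mu> \<ge> 0 \<and> (\<forall>j\<in>G. d j \<ge> (\<Sum>k\<in>K. a j k * \<alpha> k) - \<mu> * pr j) \<and>
          (\<Sum>k\<in>K. r k * \<alpha> k) - \<mu> * m \<ge> (\<Sum>j\<in>G. d j * xs j)"
proof -
  define c where "c = (\<Sum>j\<in>G. d j * xs j)"
  define A where "A l v = (case l of Cov k \<Rightarrow> (case v of None \<Rightarrow> r k | Some j \<Rightarrow> - a j k)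
     | Nn j' \<Rightarrow> (if v = Some j' then -1 else 0)
     | Bud \<Rightarrow> (case v of None \<Rightarrow> - m | Some j \<Rightarrow> pr j)
     | Tpos \<Rightarrow> (if v = None then -1 else 0)
     | Obj \<Rightarrow> (case v of None \<Rightarrow> - c | Some j \<Rightarrow> d j))" for l :: "('c, 'g) cons" and v :: "'g option"
  define bb where "bb l = (if l = Obj then -1 else (0::real))" for l :: "('c, 'g) cons"
  define J where "J = insert None (Some ` G)"
  define L where "L = Cov ` K \<union> Nn ` G \<union> {Bud, Tpos, Obj}"
  have fJ: "finite J" and fL: "finite L" using fG fK by (auto simp: J_def L_def)
  have noX: "\<not> (\<exists>x. \<forall>l\<in>L. (\<Sum>v\<in>J. A l v * x v) \<le> bb l)"
  proof
    assume "\<exists>x. \<forall>l\<in>L. (\<Sum>v\<in>J. A l v * x v) \<le> bb l"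
    then obtain x where x: "\<forall>l\<in>L. (\<Sum>v\<in>J. A l v * x v) \<le> bb l" by blast
    have xl: "\<And>l. l \<in> L \<Longrightarrow> (\<Sum>v\<in>J. A l v * x v) \<le> bb l" using x by blast
    define t where "t = x None"
    define z where "z j = x (Some j)" for j
    have h1: "\<forall>k\<in>K. (\<Sum>j\<in>G. a j k * z j) \<ge> r k * t"
    proof
      fix k assume "k \<in> K"
      then have "(\<Sum>v\<in>J. A (Cov k) v * x v) \<le> 0" using xl[of "Cov k"] by (simp add: L_def bb_def)
      then show "(\<Sum>j\<in>G. a j k * z j) \<ge> r k * t"
        using fG unfolding J_def sumJ[OF fG] by (simp add: A_def t_def z_def sum_negf)
    qed
    have h2: "\<forall>j\<in>G. z j \<ge> 0"
    proof
      fix j assume j: "j \<in> G"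
      then have "(\<Sum>v\<in>J. A (Nn j) v * x v) \<le> 0" using xl[of "Nn j"] by (simp add: L_def bb_def)
      then show "z j \<ge> 0"
        using fG j unfolding J_def sumJ[OF fG] by (simp add: A_def t_def z_def sum_ind2)
    qed
    have h3: "(\<Sum>j\<in>G. pr j * z j) \<le> m * t"
    proof -
      have "(\<Sum>v\<in>J. A Bud v * x v) \<le> 0" using xl[of Bud] by (simp add: L_def bb_def)
      then show ?thesis using fG unfolding J_def sumJ[OF fG] by (simp add: A_def t_def z_def)
    qed
    have h4: "t \<ge> 0"
    proof -
      have "(\<Sum>v\<in>J. A Tpos v * x v) \<le> 0" using xl[of Tpos] by (simp add: L_def bb_def)
      then show ?thesis using fG unfolding J_def sumJ[OF fG] by (simp add: A_def t_def z_def)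
    qed
    have h5: "(\<Sum>j\<in>G. d j * z j) \<le> c * t - 1"
    proof -
      have "(\<Sum>v\<in>J. A Obj v * x v) \<le> -1" using xl[of Obj] by (simp add: L_def bb_def)
      then show ?thesis using fG unfolding J_def sumJ[OF fG] by (simp add: A_def t_def z_def)
    qed
    show False
    proof (cases "t = 0")
      case True
      define y where "y j = xs j + z j" for j
      have "(\<forall>k\<in>K. (\<Sum>j\<in>G. a j k * y j) \<ge> r k) \<and> (\<forall>j\<in>G. y j \<ge> 0) \<and> (\<Sum>j\<in>G. pr j * y j) \<le> m"
        using fe1 fe2 fe3 h1 h2 h3 True
        by (auto simp: y_def distrib_left sum.distrib intro: add_mono add_nonneg_nonneg
            add_increasing2)
      with opt have "c \<le> (\<Sum>j\<in>G. d j * y j)" by (simp add: c_def)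
      also have "\<dots> = c + (\<Sum>j\<in>G. d j * z j)" by (simp add: y_def distrib_left sum.distrib c_def)
      finally show False using h5 True by simp
    next
      case False
      with h4 have tp: "t > 0" by simp
      define y where "y j = z j / t" for j
      have "(\<forall>k\<in>K. (\<Sum>j\<in>G. a j k * y j) \<ge> r k) \<and> (\<forall>j\<in>G. y j \<ge> 0) \<and> (\<Sum>j\<in>G. pr j * y j) \<le> m"
      proof (intro conjI ballI)
        fix k assume "k \<in> K"
        then have "r k * t \<le> (\<Sum>j\<in>G. a j k * z j)" using h1 by auto
        then have "r k \<le> (\<Sum>j\<in>G. a j k * z j) / t" using tp by (simp add: pos_le_divide_eq)
        then show "r k \<le> (\<Sum>j\<in>G. a j k * y j)" by (simp add: y_def sum_divide_distrib)
      next
        fix j assume "j \<in> G" then show "y j \<ge> 0" using h2 tp by (simp add: y_def)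
      next
        have "(\<Sum>j\<in>G. pr j * z j) / t \<le> m" using h3 tp by (simp add: pos_divide_le_eq)
        then show "(\<Sum>j\<in>G. pr j * y j) \<le> m" by (simp add: y_def sum_divide_distrib)
      qed
      with opt have "c \<le> (\<Sum>j\<in>G. d j * y j)" by (simp add: c_def)
      also have "\<dots> = (\<Sum>j\<in>G. d j * z j) / t" by (simp add: y_def sum_divide_distrib)
      also have "\<dots> \<le> (c * t - 1) / t" using h5 tp by (simp add: divide_right_mono)
      also have "\<dots> = c - 1 / t" using tp by (simp add: field_simps)
      finally show False using tp by simp
    qed
  qed
  from farkas[OF fJ fL, of A bb] noX
  obtain y where y0: "\<forall>l\<in>L. y l \<ge> 0" and yc: "\<forall>v\<in>J. (\<Sum>l\<in>L. y l * A l v) = 0"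
    and yb: "(\<Sum>l\<in>L. y l * bb l) < 0" by blast
  have "(\<Sum>l\<in>L. y l * bb l) = - y Obj" using fG fK unfolding L_def sumL[OF fG fK] by (simp add: bb_def)
  with yb have zp: "y Obj > 0" by simp
  define z where "z = y Obj"
  define \<alpha> where "\<alpha> k = y (Cov k) / z" for k
  define \<mu> where "\<mu> = y Bud / z"
  have col: "(\<Sum>k\<in>K. y (Cov k) * a j k) + y (Nn j) - y Bud * pr j = z * d j" if j: "j \<in> G" for j
  proof -
    have "(\<Sum>l\<in>L. y l * A l (Some j)) = 0" using yc j by (simp add: J_def)
    then have "(\<Sum>k\<in>K. y (Cov k) * - a j k) + (\<Sum>j'\<in>G. y (Nn j') * (if Some j = Some j' then -1 else 0))
        + y Bud * pr j + y Obj * d j = 0"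
      using fG fK unfolding L_def sumL[OF fG fK] by (simp add: A_def)
    moreover have "(\<Sum>j'\<in>G. y (Nn j') * (if Some j = Some j' then -1 else 0)) = - y (Nn j)"
      using sum_ind2[OF fG j, of "-1" "\<lambda>j'. y (Nn j')"] by (simp add: mult.commute eq_commute)
    ultimately show ?thesis by (simp add: z_def sum_negf)
  qed
  have colN: "(\<Sum>k\<in>K. y (Cov k) * r k) - y Bud * m - y Tpos = z * c"
  proof -
    have "(\<Sum>l\<in>L. y l * A l None) = 0" using yc by (simp add: J_def)
    then show ?thesis using fG fK unfolding L_def sumL[OF fG fK] by (simp add: A_def z_def)
  qed
  show ?thesis
  proof (intro exI conjI ballI)
    fix k assume "k \<in> K" then show "\<alpha> k \<ge> 0" using y0 zp by (simp add: \<alpha>_def L_def z_def)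
  next
    show "\<mu> \<ge> 0" using y0 zp by (simp add: \<mu>_def L_def z_def)
  next
    fix j assume j: "j \<in> G"
    have "y (Nn j) \<ge> 0" using y0 j by (simp add: L_def)
    with col[OF j] have "(\<Sum>k\<in>K. y (Cov k) * a j k) - y Bud * pr j \<le> z * d j" by linarith
    then have "((\<Sum>k\<in>K. y (Cov k) * a j k) - y Bud * pr j) / z \<le> d j" using zp
      by (simp add: z_def pos_divide_le_eq mult.commute)
    then show "(\<Sum>k\<in>K. a j k * \<alpha> k) - \<mu> * pr j \<le> d j"
      by (simp add: \<alpha>_def \<mu>_def diff_divide_distrib sum_divide_distrib mult.commute)
  next
    have "y Tpos \<ge> 0" using y0 by (simp add: L_def)
    with colN have "z * c \<le> (\<Sum>k\<in>K. y (Cov k) * r k) - y Bud * m" by linarith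
    then have "c \<le> ((\<Sum>k\<in>K. y (Cov k) * r k) - y Bud * m) / z" using zp
      by (simp add: z_def pos_le_divide_eq mult.commute)
    then show "(\<Sum>j\<in>G. d j * xs j) \<le> (\<Sum>k\<in>K. r k * \<alpha> k) - \<mu> * m"
      by (simp add: c_def \<alpha>_def \<mu>_def diff_divide_distrib sum_divide_distrib mult.commute)
  qed
qed



lemma weak_dual:
  assumes vm: "valid_market M" and Y: "LP_feasible M Y" and D: "DLP_feasible M lam \<beta> q"
  shows "DLP_obj M \<beta> q \<le> LP_obj M lam Y"
proof -
  let ?A = "agents M" and ?G = "goods M" and ?K = "cidx M"
  have fA: "finite ?A" and fG: "finite ?G" and fK: "finite ?K" using vm by (auto simp: valid_market_def)
  have per: "(\<Sum>k\<in>?K. req M i k * \<beta> i k) - (\<Sum>j\<in>?G. q j * Y i j) \<le> lam i * (\<Sum>j\<in>?G. delay M i j * Y i j)"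
    if i: "i \<in> ?A" for i
  proof -
    have "(\<Sum>k\<in>?K. \<beta> i k * (\<Sum>j\<in>?G. coef M i j k * Y i j)) - 1 * (\<Sum>j\<in>?G. q j * Y i j)
        \<le> (\<Sum>j\<in>?G. (lam i * delay M i j) * Y i j)"
      by (rule wd) (use Y D i in \<open>auto simp: LP_feasible_def DLP_feasible_def\<close>)
    moreover have "(\<Sum>k\<in>?K. req M i k * \<beta> i k) \<le> (\<Sum>k\<in>?K. \<beta> i k * (\<Sum>j\<in>?G. coef M i j k * Y i j))"
      by (rule sum_mono) (use Y D i in \<open>auto simp: LP_feasible_def DLP_feasible_def mult.commute intro: mult_left_mono\<close>)
    ultimately show ?thesis by (simp add: sum_distrib_left mult.assoc)
  qed
  have "(\<Sum>i\<in>?A. \<Sum>j\<in>?G. q j * Y i j) = (\<Sum>j\<in>?G. q j * (\<Sum>i\<in>?A. Y i j))"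
    by (simp add: sum_distrib_left sum.swap[of _ ?A ?G])
  also have "\<dots> \<le> (\<Sum>j\<in>?G. q j)"
    by (rule sum_mono) (use Y D in \<open>auto simp: LP_feasible_def DLP_feasible_def intro: mult_left_le\<close>)
  finally have qs: "(\<Sum>i\<in>?A. \<Sum>j\<in>?G. q j * Y i j) \<le> (\<Sum>j\<in>?G. q j)" .
  have "(\<Sum>i\<in>?A. (\<Sum>k\<in>?K. req M i k * \<beta> i k) - (\<Sum>j\<in>?G. q j * Y i j)) \<le> LP_obj M lam Y"
    unfolding LP_obj_def by (rule sum_mono) (rule per)
  then show ?thesis using qs by (simp add: DLP_obj_def sum_subtractf)
qed

theorem lemmaE3:
  fixes M :: "('a, 'g, 'c) market"
    and X :: "'a \<Rightarrow> 'g \<Rightarrow> real" and p :: "'g \<Rightarrow> real"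
  assumes "valid_market M"
    and "sufficient_demand M"
    and "market_equilibrium M X p"
  shows "\<exists>lam :: 'a \<Rightarrow> real. \<exists>\<alpha> :: 'a \<Rightarrow> 'c \<Rightarrow> real.
           (\<forall>i\<in>agents M. lam i > 0) \<and>
           (\<forall>i\<in>agents M. \<forall>k\<in>cidx M. \<alpha> i k \<ge> 0) \<and>
           LP_optimal M lam X \<and> DLP_optimal M lam \<alpha> p"
proof -
  note vm = assms(1) and sd = assms(2) and eq = assms(3)
  let ?A = "agents M" and ?G = "goods M" and ?K = "cidx M"
  have fA: "finite ?A" and fG: "finite ?G" and fK: "finite ?K" using vm by (auto simp: valid_market_def)
  have p0: "\<forall>j\<in>?G. p j \<ge> 0" and sup: "\<forall>j\<in>?G. (\<Sum>i\<in>?A. X i j) \<le> 1"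
    and ob: "\<forall>i\<in>?A. optimal_bundle M p i (X i)"
    and clr: "\<forall>j\<in>?G. (\<Sum>i\<in>?A. X i j) < 1 \<longrightarrow> p j = 0"
    using eq by (auto simp: market_equilibrium_def)
  have Xcc: "CC M i (X i)" if "i \<in> ?A" for i using ob that by (auto simp: optimal_bundle_def)
  have Xnn: "X i j \<ge> 0" if "i \<in> ?A" "j \<in> ?G" for i j using Xcc[OF that(1)] that(2) by (auto simp: CC_def)
  have Xle1: "X i j \<le> 1" if "i \<in> ?A" "j \<in> ?G" for i j
  proof -
    have "X i j \<le> (\<Sum>i'\<in>?A. X i' j)" using that fA Xnn by (intro member_le_sum) auto
    then show ?thesis using sup that by force
  qed
  have "\<forall>i\<in>?A. \<exists>z. (\<forall>k\<in>?K. fst z k \<ge> 0) \<and> snd z \<ge> 0 \<and>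
      (\<forall>j\<in>?G. delay M i j \<ge> (\<Sum>k\<in>?K. coef M i j k * fst z k) - snd z * p j) \<and>
      (\<Sum>k\<in>?K. req M i k * fst z k) - snd z * budget M i \<ge> (\<Sum>j\<in>?G. delay M i j * X i j)"
  proof
    fix i assume i: "i \<in> ?A"
    have "\<exists>\<alpha> \<mu>. (\<forall>k\<in>?K. \<alpha> k \<ge> 0) \<and> \<mu> \<ge> 0 \<and>
      (\<forall>j\<in>?G. delay M i j \<ge> (\<Sum>k\<in>?K. coef M i j k * \<alpha> k) - \<mu> * p j) \<and>
      (\<Sum>k\<in>?K. req M i k * \<alpha> k) - \<mu> * budget M i \<ge> (\<Sum>j\<in>?G. delay M i j * X i j)"
      by (rule agent_dual[OF fG fK]) (use ob i in \<open>auto simp: optimal_bundle_def CC_def cost_def\<close>)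
    then show "\<exists>z. (\<forall>k\<in>?K. fst z k \<ge> 0) \<and> snd z \<ge> 0 \<and>
      (\<forall>j\<in>?G. delay M i j \<ge> (\<Sum>k\<in>?K. coef M i j k * fst z k) - snd z * p j) \<and>
      (\<Sum>k\<in>?K. req M i k * fst z k) - snd z * budget M i \<ge> (\<Sum>j\<in>?G. delay M i j * X i j)"
    proof -
      from \<open>\<exists>\<alpha> \<mu>. _\<close> obtain \<alpha> \<mu> where "(\<forall>k\<in>?K. \<alpha> k \<ge> 0) \<and> \<mu> \<ge> 0 \<and>
      (\<forall>j\<in>?G. delay M i j \<ge> (\<Sum>k\<in>?K. coef M i j k * \<alpha> k) - \<mu> * p j) \<and>
      (\<Sum>k\<in>?K. req M i k * \<alpha> k) - \<mu> * budget M i \<ge> (\<Sum>j\<in>?G. delay M i j * X i j)" by blast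
      then show ?thesis by (intro exI[of _ "(\<alpha>, \<mu>)"]) simp
    qed
  qed
  from bchoice[OF this] obtain f where f: "\<forall>i\<in>?A. (\<forall>k\<in>?K. fst (f i) k \<ge> 0) \<and> snd (f i) \<ge> 0 \<and>
      (\<forall>j\<in>?G. delay M i j \<ge> (\<Sum>k\<in>?K. coef M i j k * fst (f i) k) - snd (f i) * p j) \<and>
      (\<Sum>k\<in>?K. req M i k * fst (f i) k) - snd (f i) * budget M i \<ge> (\<Sum>j\<in>?G. delay M i j * X i j)"
    by blast
  define al where "al i = fst (f i)" for i
  define mu where "mu i = snd (f i)" for i
  have al0: "\<And>i k. i \<in> ?A \<Longrightarrow> k \<in> ?K \<Longrightarrow> al i k \<ge> 0" using f by (auto simp: al_def)
  have mu0: "\<And>i. i \<in> ?A \<Longrightarrow> mu i \<ge> 0" using f by (auto simp: mu_def)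
  have dfe: "\<And>i j. i \<in> ?A \<Longrightarrow> j \<in> ?G \<Longrightarrow> delay M i j \<ge> (\<Sum>k\<in>?K. coef M i j k * al i k) - mu i * p j"
    using f by (auto simp: al_def mu_def)
  have dob: "\<And>i. i \<in> ?A \<Longrightarrow> (\<Sum>k\<in>?K. req M i k * al i k) - mu i * budget M i \<ge> cost M i (X i)"
    using f by (auto simp: al_def mu_def cost_def)
  have wdi: "(\<Sum>k\<in>?K. req M i k * al i k) - mu i * (\<Sum>j\<in>?G. p j * y j) \<le> cost M i y"
    if i: "i \<in> ?A" and y: "CC M i y" for i y
  proof -
    have "(\<Sum>k\<in>?K. al i k * (\<Sum>j\<in>?G. coef M i j k * y j)) - mu i * (\<Sum>j\<in>?G. p j * y j) \<le> cost M i y"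
      unfolding cost_def by (rule wd) (use y i dfe in \<open>auto simp: CC_def\<close>)
    moreover have "(\<Sum>k\<in>?K. req M i k * al i k) \<le> (\<Sum>k\<in>?K. al i k * (\<Sum>j\<in>?G. coef M i j k * y j))"
      by (rule sum_mono) (use y i al0 in \<open>auto simp: CC_def mult.commute intro: mult_left_mono\<close>)
    ultimately show ?thesis by simp
  qed
  have mupos: "mu i > 0" if i: "i \<in> ?A" for i
  proof (rule ccontr)
    assume "\<not> mu i > 0"
    with mu0[OF i] have m0: "mu i = 0" by simp
    have "CC M i (X i) \<and> (\<forall>y. CC M i y \<longrightarrow> cost M i (X i) \<le> cost M i y)"
    proof (intro conjI allI impI)
      show "CC M i (X i)" using Xcc[OF i] .
      fix y assume "CC M i y"
      from wdi[OF i this] dob[OF i] m0 show "cost M i (X i) \<le> cost M i y" by simp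
    qed
    with sd i obtain j where "j \<in> ?G" "X i j > 1" unfolding sufficient_demand_def by blast
    with Xle1[OF i] show False by force
  qed
  have tight: "(\<Sum>j\<in>?G. p j * X i j) = budget M i" and
    costeq: "cost M i (X i) = (\<Sum>k\<in>?K. req M i k * al i k) - mu i * budget M i"
    if i: "i \<in> ?A" for i
  proof -
    have bud: "(\<Sum>j\<in>?G. p j * X i j) \<le> budget M i" using ob i by (auto simp: optimal_bundle_def)
    have "(\<Sum>k\<in>?K. req M i k * al i k) - mu i * (\<Sum>j\<in>?G. p j * X i j) \<le> cost M i (X i)"
      using wdi[OF i Xcc[OF i]] .
    with dob[OF i] have "mu i * budget M i \<le> mu i * (\<Sum>j\<in>?G. p j * X i j)" by simp
    with mupos[OF i] have "budget M i \<le> (\<Sum>j\<in>?G. p j * X i j)" by simp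
    with bud show t: "(\<Sum>j\<in>?G. p j * X i j) = budget M i" by simp
    show "cost M i (X i) = (\<Sum>k\<in>?K. req M i k * al i k) - mu i * budget M i"
      using wdi[OF i Xcc[OF i]] dob[OF i] t by simp
  qed
  define lam where "lam i = 1 / mu i" for i
  define alh where "alh i k = al i k / mu i" for i k
  have lpf: "LP_feasible M X" using Xcc sup by (auto simp: LP_feasible_def CC_def)
  have dlf: "DLP_feasible M lam alh p"
    unfolding DLP_feasible_def
  proof (intro conjI ballI)
    fix i j assume i: "i \<in> ?A" and j: "j \<in> ?G"
    have "((\<Sum>k\<in>?K. coef M i j k * al i k) - mu i * p j) / mu i \<le> delay M i j / mu i"
      using dfe[OF i j] mupos[OF i] by (simp add: divide_right_mono)
    then show "(\<Sum>k\<in>?K. coef M i j k * alh i k) - p j \<le> lam i * delay M i j"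
      using mupos[OF i] by (simp add: alh_def lam_def diff_divide_distrib sum_divide_distrib)
  next
    fix i k assume ik: "i \<in> ?A" "k \<in> ?K" then show "alh i k \<ge> 0" using al0[OF ik] mupos[OF ik(1)] by (simp add: alh_def)
  next
    fix j assume "j \<in> ?G" then show "p j \<ge> 0" using p0 by simp
  qed
  have "LP_obj M lam X = (\<Sum>i\<in>?A. (\<Sum>k\<in>?K. req M i k * alh i k) - budget M i)"
    unfolding LP_obj_def
  proof (rule sum.cong[OF refl])
    fix i assume i: "i \<in> ?A"
    have "lam i * (\<Sum>j\<in>?G. delay M i j * X i j) = cost M i (X i) / mu i"
      by (simp add: lam_def cost_def)
    also have "\<dots> = (\<Sum>k\<in>?K. req M i k * alh i k) - budget M i"
      using costeq[OF i] mupos[OF i] by (simp add: alh_def diff_divide_distrib sum_divide_distrib)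
    finally show "lam i * (\<Sum>j\<in>?G. delay M i j * X i j) = (\<Sum>k\<in>?K. req M i k * alh i k) - budget M i" .
  qed
  also have "(\<Sum>i\<in>?A. budget M i) = (\<Sum>j\<in>?G. p j)"
  proof -
    have "(\<Sum>i\<in>?A. budget M i) = (\<Sum>i\<in>?A. \<Sum>j\<in>?G. p j * X i j)" using tight by simp
    also have "\<dots> = (\<Sum>j\<in>?G. p j * (\<Sum>i\<in>?A. X i j))"
      by (simp add: sum_distrib_left sum.swap[of _ ?A ?G])
    also have "\<dots> = (\<Sum>j\<in>?G. p j)"
    proof (rule sum.cong[OF refl])
      fix j assume j: "j \<in> ?G"
      show "p j * (\<Sum>i\<in>?A. X i j) = p j"
      proof (cases "(\<Sum>i\<in>?A. X i j) < 1")
        case True then show ?thesis using clr j by simp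
      next
        case False then show ?thesis using sup j by force
      qed
    qed
    finally show ?thesis .
  qed
  then have objeq: "LP_obj M lam X = DLP_obj M alh p"
    using calculation by (simp add: DLP_obj_def sum_subtractf)
  show ?thesis
  proof (intro exI conjI ballI)
    fix i assume i: "i \<in> ?A" then show "lam i > 0" using mupos[OF i] by (simp add: lam_def)
  next
    fix i k assume ik: "i \<in> ?A" "k \<in> ?K" then show "alh i k \<ge> 0" using al0[OF ik] mupos[OF ik(1)] by (simp add: alh_def)
  next
    show "LP_optimal M lam X" unfolding LP_optimal_def
      using lpf objeq weak_dual[OF vm _ dlf] by simp
  next
    show "DLP_optimal M lam alh p" unfolding DLP_optimal_def
      using dlf objeq weak_dual[OF vm lpf, of lam] by auto
  qed
qed

end
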